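(* For each prime power $n$, let $U_n$ be the vertex-face transition matrix of a circular self-dual orientably-regular embedding of $K_n$. Then the family of discrete quantum walks determined by $\{U_n : n \text{ a prime power}\}$ is sedentary.
   Context: Setting. A circular embedding is a cellular embedding on an orientable surface in which every face is bounded by a cycle. It is self-dual if it is isomorphic to its dual. It is orientably-regular if its group of orientation-preserving automorphisms acts regularly on the arcs (ordered pairs $(u,v)$ with $\{u,v\}$ an edge). Vertex-face transition matrix. Fix a consistent orientation of the faces (each shared edge receives opposite directions in its two faces). Let $M$ be the arc-face incidence matrix and $N$ the arc-tail incidence matrix, and $\widehat M,\widehat N$ these with columns scaled to unit length. Then $U=(2\widehat M\widehat M^T-I)(2\widehat N\widehat N^T-I)$. Sedentary. A sequence of discrete quantum walks with transition matrices $U_1,U_2,\dots$ is sedentary if, for every fixed positive integer $t$, the mixing matrices $U_n^t\circ\overline{U_n^t}$ (where $\circ$ is the entrywise product) converge to the identity as $n\to\infty$, i.e. $\max_{a,b}|(U_n^t\circ\overline{U_n^t}-I)_{a,b}|\to0$. *)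

theory Defs
  imports Complex_Main "HOL-Number_Theory.Prime_Powers"
begin

definition arcs :: "nat \<Rightarrow> (nat \<times> nat) set" where
  "arcs n = {(u,v). u < n \<and> v < n \<and> u \<noteq> v}"

definition tail :: "nat \<times> nat \<Rightarrow> nat" where "tail a = fst a"
definition rev_arc :: "nat \<times> nat \<Rightarrow> nat \<times> nat" where "rev_arc a = (snd a, fst a)"

text \<open>Rotation systems of a connected graph are exactly the
  cellular embeddings on orientable surfaces (Heffter-Edmonds).\<close>

definition rotation_system :: "nat \<Rightarrow> (nat \<Rightarrow> nat \<Rightarrow> nat) \<Rightarrow> bool" where
  "rotation_system n r \<longleftrightarrow>
     (\<forall>u<n. bij_betw (r u) ({..<n} - {u}) ({..<n} - {u}) \<and>
            (\<forall>v \<in> {..<n} - {u}. \<forall>w \<in> {..<n} - {u}. \<exists>k. (r u ^^ k) v = w))"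

definition rot :: "(nat \<Rightarrow> nat \<Rightarrow> nat) \<Rightarrow> nat \<times> nat \<Rightarrow> nat \<times> nat" where
  "rot r a = (fst a, r (fst a) (snd a))"

definition face_succ :: "(nat \<Rightarrow> nat \<Rightarrow> nat) \<Rightarrow> nat \<times> nat \<Rightarrow> nat \<times> nat" where
  "face_succ r a = rot r (rev_arc a)"

definition face_of :: "(nat \<Rightarrow> nat \<Rightarrow> nat) \<Rightarrow> nat \<times> nat \<Rightarrow> (nat \<times> nat) set" where
  "face_of r a = {(face_succ r ^^ k) a | k. True}"

definition faces :: "nat \<Rightarrow> (nat \<Rightarrow> nat \<Rightarrow> nat) \<Rightarrow> (nat \<times> nat) set set" where
  "faces n r = face_of r ` arcs n"

text \<open>Circular: every facial walk is a cycle, i.e. it has length at least 3 and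
  passes through pairwise distinct vertices.\<close>

definition circular :: "nat \<Rightarrow> (nat \<Rightarrow> nat \<Rightarrow> nat) \<Rightarrow> bool" where
  "circular n r \<longleftrightarrow> (\<forall>a \<in> arcs n. inj_on tail (face_of r a) \<and> card (face_of r a) \<ge> 3)"

definition orient_aut :: "nat \<Rightarrow> (nat \<Rightarrow> nat \<Rightarrow> nat) \<Rightarrow> (nat \<Rightarrow> nat) \<Rightarrow> bool" where
  "orient_aut n r g \<longleftrightarrow>
     bij_betw g {..<n} {..<n} \<and> (\<forall>x. x \<ge> n \<longrightarrow> g x = x) \<and>
     (\<forall>u<n. \<forall>v<n. u \<noteq> v \<longrightarrow> r (g u) (g v) = g (r u v))"

definition orientably_regular :: "nat \<Rightarrow> (nat \<Rightarrow> nat \<Rightarrow> nat) \<Rightarrow> bool" where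
  "orientably_regular n r \<longleftrightarrow>
     (\<forall>a \<in> arcs n. \<forall>b \<in> arcs n. \<exists>!g. orient_aut n r g \<and> (g (fst a), g (snd a)) = b)"

text \<open>The map is (arcs, rev_arc, rot r); its dual is (arcs, rev_arc, face_succ r).
  Self-dual: there is a dart bijection h commuting with rev_arc that carries rot r to
  face_succ r (orientation-preserving isomorphism) or to its inverse (orientation-reversing
  isomorphism).\<close>

definition self_dual :: "nat \<Rightarrow> (nat \<Rightarrow> nat \<Rightarrow> nat) \<Rightarrow> bool" where
  "self_dual n r \<longleftrightarrow>
     (\<exists>h. bij_betw h (arcs n) (arcs n) \<and>
          (\<forall>a \<in> arcs n. h (rev_arc a) = rev_arc (h a)) \<and>
          ((\<forall>a \<in> arcs n. h (rot r a) = face_succ r (h a)) \<or>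
           (\<forall>a \<in> arcs n. face_succ r (h (rot r a)) = h a)))"

type_synonym ('i,'j) cmat = "'i \<Rightarrow> 'j \<Rightarrow> complex"

definition mmult :: "'j set \<Rightarrow> ('i,'j) cmat \<Rightarrow> ('j,'k) cmat \<Rightarrow> ('i,'k) cmat" where
  "mmult J A B = (\<lambda>i k. \<Sum>j\<in>J. A i j * B j k)"

definition mtrans :: "('i,'j) cmat \<Rightarrow> ('j,'i) cmat" where
  "mtrans A = (\<lambda>j i. A i j)"

definition idm :: "('i,'i) cmat" where
  "idm = (\<lambda>i j. if i = j then 1 else 0)"

definition colnormalize :: "'i set \<Rightarrow> ('i,'j) cmat \<Rightarrow> ('i,'j) cmat" where
  "colnormalize I A = (\<lambda>i j. A i j / complex_of_real (sqrt (\<Sum>i'\<in>I. (cmod (A i' j))\<^sup>2)))"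

fun mpow :: "'i set \<Rightarrow> ('i,'i) cmat \<Rightarrow> nat \<Rightarrow> ('i,'i) cmat" where
  "mpow I A 0 = idm"
| "mpow I A (Suc t) = mmult I (mpow I A t) A"

definition arc_face_matrix :: "(nat \<Rightarrow> nat \<Rightarrow> nat) \<Rightarrow> (nat \<times> nat, (nat \<times> nat) set) cmat" where
  "arc_face_matrix r = (\<lambda>a F. if a \<in> F then 1 else 0)"

definition arc_tail_matrix :: "(nat \<times> nat, nat) cmat" where
  "arc_tail_matrix = (\<lambda>a v. if tail a = v then 1 else 0)"

definition vf_transition :: "nat \<Rightarrow> (nat \<Rightarrow> nat \<Rightarrow> nat) \<Rightarrow> (nat \<times> nat, nat \<times> nat) cmat" where
  "vf_transition n r =
     (let Mh = colnormalize (arcs n) (arc_face_matrix r);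
          Nh = colnormalize (arcs n) arc_tail_matrix;
          RM = (\<lambda>a b. 2 * mmult (faces n r) Mh (mtrans Mh) a b - idm a b);
          RN = (\<lambda>a b. 2 * mmult {..<n} Nh (mtrans Nh) a b - idm a b)
      in mmult (arcs n) RM RN)"

definition mixing :: "nat \<Rightarrow> (nat \<Rightarrow> nat \<Rightarrow> nat) \<Rightarrow> nat \<Rightarrow> (nat \<times> nat, nat \<times> nat) cmat" where
  "mixing n r t = (let P = mpow (arcs n) (vf_transition n r) t in (\<lambda>a b. P a b * cnj (P a b)))"

end

theory Submission
  imports Defs
begin


definition colbound :: "'i set \<Rightarrow> ('i,'i) cmat \<Rightarrow> real \<Rightarrow> bool" where
  "colbound S M K \<longleftrightarrow> (\<forall>b\<in>S. (\<Sum>c\<in>S. cmod (M c b)) \<le> K)"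
definition entbound :: "'i set \<Rightarrow> ('i,'i) cmat \<Rightarrow> real \<Rightarrow> bool" where
  "entbound S M e \<longleftrightarrow> (\<forall>a\<in>S. \<forall>b\<in>S. cmod (M a b) \<le> e)"

lemma L1:
  assumes "finite S" "entbound S D e" "colbound S U K" "e \<ge> 0"
  shows "entbound S (mmult S D U) (e*K)"
  unfolding entbound_def
proof (intro ballI)
  fix a b assume a: "a \<in> S" and b: "b \<in> S"
  have "cmod (mmult S D U a b) \<le> (\<Sum>c\<in>S. cmod (D a c) * cmod (U c b))"
    unfolding mmult_def by (rule order_trans[OF norm_sum]) (simp add: norm_mult)
  also have "\<dots> \<le> (\<Sum>c\<in>S. e * cmod (U c b))"
    using assms(2) a by (intro sum_mono mult_right_mono) (auto simp: entbound_def)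
  also have "\<dots> = e * (\<Sum>c\<in>S. cmod (U c b))" by (simp add: sum_distrib_left)
  also have "\<dots> \<le> e * K" using assms(3,4) b by (intro mult_left_mono) (auto simp: colbound_def)
  finally show "cmod (mmult S D U a b) \<le> e * K" .
qed

lemma L2:
  assumes "finite S" "colbound S A KA" "colbound S B KB" "KA \<ge> 0"
  shows "colbound S (mmult S A B) (KA*KB)"
  unfolding colbound_def
proof
  fix b assume b: "b \<in> S"
  have "(\<Sum>c\<in>S. cmod (mmult S A B c b)) \<le> (\<Sum>c\<in>S. \<Sum>d\<in>S. cmod (A c d) * cmod (B d b))"
    unfolding mmult_def by (intro sum_mono, rule order_trans[OF norm_sum]) (simp add: norm_mult)
  also have "\<dots> = (\<Sum>d\<in>S. (\<Sum>c\<in>S. cmod (A c d)) * cmod (B d b))"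
    by (subst sum.swap) (simp add: sum_distrib_right)
  also have "\<dots> \<le> (\<Sum>d\<in>S. KA * cmod (B d b))"
    using assms(2) by (intro sum_mono mult_right_mono) (auto simp: colbound_def)
  also have "\<dots> = KA * (\<Sum>d\<in>S. cmod (B d b))" by (simp add: sum_distrib_left)
  also have "\<dots> \<le> KA * KB" using assms(3,4) b by (intro mult_left_mono) (auto simp: colbound_def)
  finally show "(\<Sum>c\<in>S. cmod (mmult S A B c b)) \<le> KA * KB" .
qed

lemma card_sum_ind:
  assumes "finite S"
  shows "(\<Sum>a\<in>S. (cmod (if a \<in> X then (1::complex) else 0))\<^sup>2) = real (card (X \<inter> S))"
proof -
  have "(\<Sum>a\<in>S. (cmod (if a \<in> X then (1::complex) else 0))\<^sup>2) = (\<Sum>a\<in>S. if a \<in> X then 1 else 0)"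
    by (intro sum.cong) auto
  also have "\<dots> = real (card (S \<inter> X))" using assms by (simp add: sum.If_cases)
  finally show ?thesis by (simp add: Int_commute)
qed

lemma proj_entry:
  assumes fS: "finite S" and fJ: "finite J"
    and uniq: "\<forall>a\<in>S. \<exists>!j. j\<in>J \<and> a \<in> X j"
    and Inc: "\<And>a j. Inc a j = (if a \<in> X j then 1 else 0)"
    and a: "a \<in> S" and j: "j \<in> J" "a \<in> X j"
  shows "mmult J (colnormalize S Inc) (mtrans (colnormalize S Inc)) a b
         = (if b \<in> X j then 1 / of_nat (card (X j \<inter> S)) else 0)"
proof -
  let ?Mh = "colnormalize S Inc"
  have Mh: "?Mh x i = (if x \<in> X i then 1 / complex_of_real (sqrt (real (card (X i \<inter> S)))) else 0)" for x i
    unfolding colnormalize_def Inc using card_sum_ind[OF fS, of "X i"] by simp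
  have "mmult J ?Mh (mtrans ?Mh) a b = (\<Sum>i\<in>J. ?Mh a i * ?Mh b i)"
    by (simp add: mmult_def mtrans_def)
  also have "\<dots> = ?Mh a j * ?Mh b j"
  proof -
    have "\<forall>i\<in>J - {j}. ?Mh a i * ?Mh b i = 0"
    proof
      fix i assume "i \<in> J - {j}"
      then have "a \<notin> X i" using uniq a j by blast
      then show "?Mh a i * ?Mh b i = 0" by (simp add: Mh)
    qed
    then have "(\<Sum>i\<in>J. ?Mh a i * ?Mh b i) = (\<Sum>i\<in>{j}. ?Mh a i * ?Mh b i)"
      using j(1) by (intro sum.mono_neutral_right[OF fJ]) auto
    then show ?thesis by simp
  qed
  also have "\<dots> = (if b \<in> X j then 1 / of_nat (card (X j \<inter> S)) else 0)"
  proof -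
    have "complex_of_real (sqrt (real (card (X j \<inter> S)))) * complex_of_real (sqrt (real (card (X j \<inter> S))))
          = of_nat (card (X j \<inter> S))"
      by (simp flip: of_real_mult)
    then show ?thesis using j(2) by (simp add: Mh)
  qed
  finally show ?thesis .
qed



lemma proj_props:
  assumes fS: "finite S" and fJ: "finite J"
    and uniq: "\<forall>a\<in>S. \<exists>!j. j\<in>J \<and> a \<in> X j"
    and Inc: "\<And>a j. Inc a j = (if a \<in> X j then 1 else 0)"
    and m: "m > 0" "\<forall>j\<in>J. m \<le> card (X j \<inter> S)"
  defines "P \<equiv> mmult J (colnormalize S Inc) (mtrans (colnormalize S Inc))"
  shows "entbound S P (1 / real m)" "colbound S P 1"
proof -
  have Pe: "P a b = (if b \<in> X j then 1 / of_nat (card (X j \<inter> S)) else 0)"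
    if "a \<in> S" "j \<in> J" "a \<in> X j" for a b j
    unfolding P_def by (rule proj_entry[OF fS fJ uniq Inc that])
  show "entbound S P (1 / real m)"
    unfolding entbound_def
  proof (intro ballI)
    fix a b assume a: "a \<in> S" and "b \<in> S"
    obtain j where j: "j \<in> J" "a \<in> X j" using uniq a by blast
    have "m \<le> card (X j \<inter> S)" using m j by auto
    then have "1 / real (card (X j \<inter> S)) \<le> 1 / real m" using m
      by (intro divide_left_mono) auto
    then show "cmod (P a b) \<le> 1 / real m"
      using Pe[OF a j] by (auto simp: norm_divide)
  qed
  show "colbound S P 1"
    unfolding colbound_def
  proof
    fix b assume b: "b \<in> S"
    obtain j where j: "j \<in> J" "b \<in> X j" using uniq b by blast
    have cpos: "card (X j \<inter> S) > 0" using b j fS by (auto simp: card_gt_0_iff)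
    have "cmod (P c b) = (if c \<in> X j then 1 / real (card (X j \<inter> S)) else 0)" if c: "c \<in> S" for c
    proof -
      obtain i where i: "i \<in> J" "c \<in> X i" using uniq c by blast
      have "b \<in> X i \<longleftrightarrow> c \<in> X j" using uniq b c i j by blast
      moreover have "c \<in> X j \<Longrightarrow> i = j" using uniq c i j by blast
      ultimately show ?thesis using Pe[OF c i, of b] by (auto simp: norm_divide)
    qed
    then have "(\<Sum>c\<in>S. cmod (P c b)) = (\<Sum>c\<in>S. if c \<in> X j then 1 / real (card (X j \<inter> S)) else 0)"
      by (intro sum.cong) auto
    also have "\<dots> = real (card (S \<inter> X j)) * (1 / real (card (X j \<inter> S)))"
      using fS by (simp add: sum.If_cases)
    also have "\<dots> = 1" using cpos by (simp add: Int_commute)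
    finally show "(\<Sum>c\<in>S. cmod (P c b)) \<le> 1" by simp
  qed
qed

lemma refl_colbound:
  assumes "finite S" "colbound S P 1"
  shows "colbound S (\<lambda>a b. 2 * P a b - idm a b) 3"
  unfolding colbound_def
proof
  fix b assume b: "b \<in> S"
  have "(\<Sum>c\<in>S. cmod (2 * P c b - idm c b)) \<le> (\<Sum>c\<in>S. 2 * cmod (P c b) + cmod (idm c b))"
    by (intro sum_mono) (metis norm_triangle_ineq4 norm_mult norm_numeral)
  also have "\<dots> = 2 * (\<Sum>c\<in>S. cmod (P c b)) + (\<Sum>c\<in>S. cmod (idm c b))"
    by (simp add: sum.distrib sum_distrib_left)
  also have "(\<Sum>c\<in>S. cmod (idm c b)) = 1"
    using assms(1) b by (simp add: idm_def if_distrib cong: if_cong)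
  moreover have "(\<Sum>c\<in>S. cmod (P c b)) \<le> 1"
    using assms(2) b unfolding colbound_def by blast
  ultimately show "(\<Sum>c\<in>S. cmod (2 * P c b - idm c b)) \<le> 3"
    by linarith
qed

lemma sum_idm_left: "finite S \<Longrightarrow> a \<in> S \<Longrightarrow> (\<Sum>c\<in>S. idm a c * f c) = f a"
proof -
  assume "finite S" "a \<in> S"
  have "(\<Sum>c\<in>S. idm a c * f c) = (\<Sum>c\<in>S. if a = c then f c else 0)"
    by (intro sum.cong) (auto simp: idm_def)
  then show ?thesis using \<open>finite S\<close> \<open>a \<in> S\<close> by simp
qed
lemma sum_idm_right: "finite S \<Longrightarrow> b \<in> S \<Longrightarrow> (\<Sum>c\<in>S. f c * idm c b) = f b"
proof -
  assume "finite S" "b \<in> S"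
  have "(\<Sum>c\<in>S. f c * idm c b) = (\<Sum>c\<in>S. if c = b then f c else 0)"
    by (intro sum.cong) (auto simp: idm_def)
  then show ?thesis using \<open>finite S\<close> \<open>b \<in> S\<close> by simp
qed

lemma U_expand:
  assumes "finite S" "a \<in> S" "b \<in> S"
  shows "mmult S (\<lambda>a b. 2 * P a b - idm a b) (\<lambda>a b. 2 * Q a b - idm a b) a b
     = 4 * mmult S P Q a b - 2 * P a b - 2 * Q a b + idm a b"
proof -
  have "mmult S (\<lambda>a b. 2 * P a b - idm a b) (\<lambda>a b. 2 * Q a b - idm a b) a b
    = (\<Sum>c\<in>S. 4 * (P a c * Q c b) - 2 * (P a c * idm c b) - 2 * (idm a c * Q c b) + idm a c * idm c b)"
    unfolding mmult_def by (intro sum.cong) (auto simp: algebra_simps)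
  also have "\<dots> = 4 * mmult S P Q a b - 2 * P a b - 2 * Q a b + idm a b"
    using assms by (simp add: sum.distrib sum_subtractf sum_distrib_left[symmetric] sum_idm_left sum_idm_right mmult_def)
  finally show ?thesis .
qed

lemma pow_bound:
  assumes fS: "finite S" and cb: "colbound S U 9" and d: "entbound S (\<lambda>a b. U a b - idm a b) \<delta>" "\<delta> \<ge> 0"
  shows "entbound S (\<lambda>a b. mpow S U t a b - idm a b) (10^t * \<delta>)"
proof (induction t)
  case 0 then show ?case using d(2) by (simp add: entbound_def)
next
  case (Suc t)
  let ?D = "\<lambda>a b. mpow S U t a b - idm a b"
  have e1: "entbound S (mmult S ?D U) (10^t * \<delta> * 9)"
    by (rule L1[OF fS Suc cb]) (use d(2) in simp)
  show ?case unfolding entbound_def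
  proof (intro ballI)
    fix a b assume a: "a \<in> S" and b: "b \<in> S"
    have "mpow S U (Suc t) a b - idm a b = mmult S ?D U a b + (U a b - idm a b)"
      using fS a by (simp add: mmult_def algebra_simps sum.distrib sum_subtractf sum_idm_left)
    also have "cmod \<dots> \<le> cmod (mmult S ?D U a b) + cmod (U a b - idm a b)" by (rule norm_triangle_ineq)
    also have "\<dots> \<le> 10^t * \<delta> * 9 + \<delta>" using e1 d a b by (intro add_mono) (auto simp: entbound_def)
    also have "\<dots> \<le> 10^Suc t * \<delta>"
    proof -
      have "\<delta> \<le> 10^t * \<delta>" using d(2) by (simp add: mult_le_cancel_right1)
      then show ?thesis by (simp add: mult.commute)
    qed
    finally show "cmod (mpow S U (Suc t) a b - idm a b) \<le> 10 ^ Suc t * \<delta>" .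
  qed
qed

lemma mix_bound:
  fixes x :: complex
  assumes "cmod (x - idm a b) \<le> d" "d \<le> 1"
  shows "cmod (x * cnj x - idm a b) \<le> 3 * d"
proof (cases "a = b")
  case True
  then have h: "cmod (x - 1) \<le> d" using assms by (simp add: idm_def)
  have eq: "x * cnj x - 1 = of_real ((cmod x - 1) * (cmod x + 1))"
    by (simp add: complex_norm_square[symmetric] algebra_simps power2_eq_square)
  have "cmod (x * cnj x - 1) = \<bar>cmod x - 1\<bar> * (cmod x + 1)"
    unfolding eq norm_of_real abs_mult by simp
  moreover have h1: "\<bar>cmod x - 1\<bar> \<le> d" using h norm_triangle_ineq3[of x 1] by simp
  moreover have "cmod x + 1 \<le> 3" using h norm_triangle_ineq2[of x 1] assms(2) by simp
  moreover have "\<bar>cmod x - 1\<bar> * (cmod x + 1) \<le> d * 3"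
    using h1 \<open>cmod x + 1 \<le> 3\<close> by (intro mult_mono) auto
  ultimately have "cmod (x * cnj x - 1) \<le> d * 3" by simp
  then show ?thesis using True by (simp add: idm_def)
next
  case False
  then have h: "cmod x \<le> d" using assms by (simp add: idm_def)
  have d0: "0 \<le> d" using h norm_ge_zero[of x] by linarith
  have "cmod (x * cnj x) = cmod x * cmod x" by (simp add: norm_mult)
  also have "\<dots> \<le> d * 1" using h assms(2) d0 by (intro mult_mono) auto
  finally show ?thesis using False d0 by (simp add: idm_def)
qed



definition star :: "nat \<Rightarrow> nat \<Rightarrow> (nat \<times> nat) set" where
  "star n u = {(x, v). x = u \<and> u < n \<and> v < n \<and> v \<noteq> u}"

lemma arcs_finite: "finite (arcs n)"
proof -
  have "arcs n \<subseteq> {..<n} \<times> {..<n}" by (auto simp: arcs_def)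
  then show ?thesis by (rule finite_subset) auto
qed

lemma card_star: "u < n \<Longrightarrow> card (star n u) = n - 1"
proof -
  assume u: "u < n"
  then have "star n u = {u} \<times> ({..<n} - {u})" by (auto simp: star_def)
  then show ?thesis using u by (simp add: card_cartesian_product_singleton)
qed

lemma star_sub: "star n u \<subseteq> arcs n"
  by (auto simp: star_def arcs_def)

lemma star_of_arc: "c \<in> arcs n \<Longrightarrow> c \<in> star n (fst c)"
  by (auto simp: star_def arcs_def)

lemma rot_funpow: "(rot r ^^ k) (u, v) = (u, (r u ^^ k) v)"
  by (induction k) (auto simp: rot_def)

lemma rs_bij: "rotation_system n r \<Longrightarrow> u < n \<Longrightarrow> bij_betw (r u) ({..<n} - {u}) ({..<n} - {u})"
  by (simp add: rotation_system_def)

lemma rs_in: "rotation_system n r \<Longrightarrow> u < n \<Longrightarrow> v \<in> {..<n} - {u} \<Longrightarrow> r u v \<in> {..<n} - {u}"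
  using rs_bij bij_betw_apply by metis

lemma rot_star: "rotation_system n r \<Longrightarrow> d \<in> star n u \<Longrightarrow> rot r d \<in> star n u"
  using rs_in[of n r u "snd d"] by (auto simp: star_def rot_def)

lemma rot_arcs: "rotation_system n r \<Longrightarrow> d \<in> arcs n \<Longrightarrow> rot r d \<in> arcs n"
  using rot_star[of n r d "fst d"] star_of_arc star_sub by blast

lemma rotk_arcs: "rotation_system n r \<Longrightarrow> d \<in> arcs n \<Longrightarrow> (rot r ^^ k) d \<in> arcs n"
  by (induction k) (auto simp: rot_arcs)

lemma rotk_star: "rotation_system n r \<Longrightarrow> d \<in> star n u \<Longrightarrow> (rot r ^^ k) d \<in> star n u"
  by (induction k) (auto simp: rot_star)

lemma rot_surj_star:
  assumes "rotation_system n r" "d \<in> star n u"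
  shows "\<exists>d'\<in>star n u. rot r d' = d"
proof -
  have u: "u < n" "snd d \<in> {..<n} - {u}" "fst d = u" using assms(2) by (auto simp: star_def)
  have "r u ` ({..<n} - {u}) = {..<n} - {u}" using rs_bij[OF assms(1) u(1)] by (simp add: bij_betw_def)
  then have "snd d \<in> r u ` ({..<n} - {u})" using u(2) by simp
  then obtain v where v: "v \<in> {..<n} - {u}" "r u v = snd d" by (rule imageE) (rule that, auto)
  then show ?thesis using u by (intro bexI[of _ "(u, v)"]) (auto simp: star_def rot_def prod_eq_iff)
qed

lemma rot_trans:
  assumes "rotation_system n r" "d \<in> star n u" "c \<in> star n u"
  shows "\<exists>k. (rot r ^^ k) d = c"
proof -
  have u: "u < n" "snd d \<in> {..<n} - {u}" "snd c \<in> {..<n} - {u}" "fst d = u" "fst c = u"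
    using assms(2,3) by (auto simp: star_def)
  then obtain k where "(r u ^^ k) (snd d) = snd c" using assms(1) unfolding rotation_system_def by blast
  then have "(rot r ^^ k) (fst d, snd d) = c" using u by (simp add: rot_funpow prod_eq_iff)
  then show ?thesis by auto
qed

lemma face_char:
  assumes rs: "rotation_system n r"
    and hb: "bij_betw h (arcs n) (arcs n)"
    and H: "(\<forall>a \<in> arcs n. h (rot r a) = face_succ r (h a)) \<or>
           (\<forall>a \<in> arcs n. face_succ r (h (rot r a)) = h a)"
    and c: "c \<in> arcs n"
  shows "face_of r (h c) = h ` star n (fst c)"
  using H
proof
  assume H1: "\<forall>a \<in> arcs n. h (rot r a) = face_succ r (h a)"
  have it: "(face_succ r ^^ k) (h c) = h ((rot r ^^ k) c)" for k
    by (induction k) (auto simp: H1 rotk_arcs[OF rs c])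
  have "face_of r (h c) = h ` {(rot r ^^ k) c | k. True}"
    unfolding face_of_def it by auto
  also have "{(rot r ^^ k) c | k. True} = star n (fst c)"
  proof
    show "{(rot r ^^ k) c | k. True} \<subseteq> star n (fst c)"
      using rotk_star[OF rs star_of_arc[OF c]] by auto
    show "star n (fst c) \<subseteq> {(rot r ^^ k) c | k. True}"
      using rot_trans[OF rs star_of_arc[OF c]] by blast
  qed
  finally show ?thesis .
next
  assume H2: "\<forall>a \<in> arcs n. face_succ r (h (rot r a)) = h a"
  have it: "(face_succ r ^^ k) (h ((rot r ^^ k) d)) = h d" if d: "d \<in> arcs n" for d k
  proof (induction k)
    case 0 then show ?case by simp
  next
    case (Suc k)
    have e: "(rot r ^^ Suc k) d = rot r ((rot r ^^ k) d)" by simp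
    have "(face_succ r ^^ Suc k) (h ((rot r ^^ Suc k) d))
          = (face_succ r ^^ k) (face_succ r (h (rot r ((rot r ^^ k) d))))"
      unfolding e by (simp add: funpow_Suc_right del: funpow.simps)
    also have "\<dots> = (face_succ r ^^ k) (h ((rot r ^^ k) d))"
      using H2 rotk_arcs[OF rs d] by simp
    finally show ?case using Suc by simp
  qed
  show ?thesis
  proof
    show "face_of r (h c) \<subseteq> h ` star n (fst c)"
    proof
      fix x assume "x \<in> face_of r (h c)"
      then obtain k where x: "x = (face_succ r ^^ k) (h c)" by (auto simp: face_of_def)
      have "(face_succ r ^^ k) (h c) \<in> h ` star n (fst c)"
      proof (induction k)
        case 0 then show ?case using star_of_arc[OF c] by simp
      next
        case (Suc k)
        then obtain d where d: "d \<in> star n (fst c)" "(face_succ r ^^ k) (h c) = h d" by auto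
        obtain d' where d': "d' \<in> star n (fst c)" "rot r d' = d" using rot_surj_star[OF rs d(1)] by blast
        have "d' \<in> arcs n" using d' star_sub by blast
        then have "face_succ r (h d) = h d'" using H2 d' by auto
        then show ?case using d d' by simp
      qed
      then show "x \<in> h ` star n (fst c)" using x by simp
    qed
    show "h ` star n (fst c) \<subseteq> face_of r (h c)"
    proof
      fix x assume "x \<in> h ` star n (fst c)"
      then obtain d where d: "d \<in> star n (fst c)" "x = h d" by auto
      obtain k where k: "(rot r ^^ k) d = c" using rot_trans[OF rs d(1) star_of_arc[OF c]] by blast
      have "d \<in> arcs n" using d star_sub by blast
      from it[OF this, of k] k have "(face_succ r ^^ k) (h c) = x" using d by simp
      then show "x \<in> face_of r (h c)" unfolding face_of_def by blast
    qed
  qed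
qed

lemma faces_props:
  assumes rs: "rotation_system n r" and sd: "self_dual n r"
  shows "\<forall>a\<in>arcs n. \<exists>!F. F \<in> faces n r \<and> a \<in> F"
        "\<forall>F\<in>faces n r. n - 1 \<le> card (F \<inter> arcs n)"
proof -
  obtain h where hb: "bij_betw h (arcs n) (arcs n)"
    and H: "(\<forall>a \<in> arcs n. h (rot r a) = face_succ r (h a)) \<or>
           (\<forall>a \<in> arcs n. face_succ r (h (rot r a)) = h a)"
    using sd unfolding self_dual_def by blast
  have fc: "\<And>c. c \<in> arcs n \<Longrightarrow> face_of r (h c) = h ` star n (fst c)"
    using face_char[OF rs hb H] by blast
  have him: "h ` arcs n = arcs n" using hb by (simp add: bij_betw_def)
  have hinj: "inj_on h (arcs n)" using hb by (simp add: bij_betw_def)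
  have fcs: "faces n r = (\<lambda>c. h ` star n (fst c)) ` arcs n"
    unfolding faces_def by (subst him[symmetric]) (auto simp: image_image fc)
  show "\<forall>a\<in>arcs n. \<exists>!F. F \<in> faces n r \<and> a \<in> F"
  proof
    fix a assume a: "a \<in> arcs n"
    then obtain c0 where c0: "c0 \<in> arcs n" "a = h c0" using him by force
    show "\<exists>!F. F \<in> faces n r \<and> a \<in> F"
    proof (rule ex1I[of _ "h ` star n (fst c0)"])
      show "h ` star n (fst c0) \<in> faces n r \<and> a \<in> h ` star n (fst c0)"
        using c0 star_of_arc[OF c0(1)] fcs by auto
      fix F assume F: "F \<in> faces n r \<and> a \<in> F"
      then obtain c where c: "c \<in> arcs n" "F = h ` star n (fst c)" using fcs by auto
      then obtain c' where c': "c' \<in> star n (fst c)" "a = h c'" using F by auto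
      have "c' \<in> arcs n" using c'(1) star_sub by blast
      moreover have "h c' = h c0" using c' c0 by simp
      ultimately have "c' = c0" using inj_onD[OF hinj] c0(1) by blast
      then have "fst c = fst c0" using c' by (auto simp: star_def)
      then show "F = h ` star n (fst c0)" using c by simp
    qed
  qed
  show "\<forall>F\<in>faces n r. n - 1 \<le> card (F \<inter> arcs n)"
  proof
    fix F assume "F \<in> faces n r"
    then obtain c where c: "c \<in> arcs n" "F = h ` star n (fst c)" using fcs by auto
    have "F \<subseteq> arcs n" using c image_mono[OF star_sub[of n "fst c"], of h] him by simp
    then have "card (F \<inter> arcs n) = card (h ` star n (fst c))" using c by (simp add: Int_absorb2)
    also have "\<dots> = card (star n (fst c))"
      using inj_on_subset[OF hinj star_sub] by (rule card_image)
    also have "\<dots> = n - 1" using c by (intro card_star) (auto simp: arcs_def)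
    finally show "n - 1 \<le> card (F \<inter> arcs n)" by simp
  qed
qed

lemma tail_props:
  shows "\<forall>a\<in>arcs n. \<exists>!v. v \<in> {..<n} \<and> a \<in> {a. tail a = v}"
        "\<forall>v\<in>{..<n}. n - 1 \<le> card ({a. tail a = v} \<inter> arcs n)"
proof -
  show "\<forall>a\<in>arcs n. \<exists>!v. v \<in> {..<n} \<and> a \<in> {a. tail a = v}"
    by (auto simp: arcs_def tail_def)
  show "\<forall>v\<in>{..<n}. n - 1 \<le> card ({a. tail a = v} \<inter> arcs n)"
  proof
    fix v assume v: "v \<in> {..<n}"
    have "{a. tail a = v} \<inter> arcs n = star n v" by (auto simp: star_def arcs_def tail_def)
    then show "n - 1 \<le> card ({a. tail a = v} \<inter> arcs n)" using card_star v by simp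
  qed
qed

lemma faces_finite: "finite (faces n r)"
  unfolding faces_def using arcs_finite by simp



lemma main_bound:
  assumes rs: "rotation_system n r" and sd: "self_dual n r" and n2: "n \<ge> 2"
  shows "entbound (arcs n) (\<lambda>a b. mpow (arcs n) (vf_transition n r) t a b - idm a b)
           (10^t * (8 / real (n - 1)))"
proof -
  let ?S = "arcs n"
  define m where "m = n - 1"
  have m0: "m > 0" using n2 by (simp add: m_def)
  have fS: "finite ?S" by (rule arcs_finite)
  define PF where "PF = mmult (faces n r) (colnormalize ?S (arc_face_matrix r)) (mtrans (colnormalize ?S (arc_face_matrix r)))"
  define PV where "PV = mmult {..<n} (colnormalize ?S arc_tail_matrix) (mtrans (colnormalize ?S arc_tail_matrix))"
  note fp = faces_props[OF rs sd]
  have PF: "entbound ?S PF (1 / real m)" "colbound ?S PF 1"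
    unfolding PF_def
    by (rule proj_props[OF fS faces_finite, where X="\<lambda>F. F"], use fp m0 in \<open>auto simp: arc_face_matrix_def m_def\<close>)+
  note tp = tail_props[of n]
  have PV: "entbound ?S PV (1 / real m)" "colbound ?S PV 1"
    unfolding PV_def
    by (rule proj_props[OF fS finite_lessThan, where X="\<lambda>v. {a. tail a = v}"], use tp m0 in \<open>auto simp: arc_tail_matrix_def m_def\<close>)+
  have U: "vf_transition n r = mmult ?S (\<lambda>a b. 2 * PF a b - idm a b) (\<lambda>a b. 2 * PV a b - idm a b)"
    by (simp add: vf_transition_def Let_def PF_def PV_def)
  have cU: "colbound ?S (vf_transition n r) 9"
    unfolding U using L2[OF fS refl_colbound[OF fS PF(2)] refl_colbound[OF fS PV(2)]] by simp
  have PFV: "entbound ?S (mmult ?S PF PV) (1 / real m * 1)"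
    by (rule L1[OF fS PF(1) PV(2)]) simp
  have eU: "entbound ?S (\<lambda>a b. vf_transition n r a b - idm a b) (8 / real m)"
    unfolding entbound_def
  proof (intro ballI)
    fix a b assume a: "a \<in> ?S" and b: "b \<in> ?S"
    have "vf_transition n r a b - idm a b = 4 * mmult ?S PF PV a b - 2 * PF a b - 2 * PV a b"
      unfolding U using U_expand[OF fS a b] by simp
    also have "cmod \<dots> \<le> 4 * cmod (mmult ?S PF PV a b) + 2 * cmod (PF a b) + 2 * cmod (PV a b)"
    proof -
      have "cmod (4 * mmult ?S PF PV a b - 2 * PF a b - 2 * PV a b)
            \<le> cmod (4 * mmult ?S PF PV a b - 2 * PF a b) + cmod (2 * PV a b)"
        by (rule norm_triangle_ineq4)
      also have "cmod (4 * mmult ?S PF PV a b - 2 * PF a b) \<le> cmod (4 * mmult ?S PF PV a b) + cmod (2 * PF a b)"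
        by (rule norm_triangle_ineq4)
      finally show ?thesis by (simp add: norm_mult)
    qed
    also have "\<dots> \<le> 4 * (1 / real m) + 2 * (1 / real m) + 2 * (1 / real m)"
    proof -
      have "cmod (mmult ?S PF PV a b) \<le> 1 / real m" "cmod (PF a b) \<le> 1 / real m" "cmod (PV a b) \<le> 1 / real m"
        using PFV PF(1) PV(1) a b unfolding entbound_def by auto
      then show ?thesis by linarith
    qed
    also have "\<dots> = 8 / real m" by simp
    finally show "cmod (vf_transition n r a b - idm a b) \<le> 8 / real m" .
  qed
  show ?thesis using pow_bound[OF fS cU eU] m0 unfolding m_def by simp
qed

theorem corollary7p2:
  "\<forall>t::nat. t \<ge> 1 \<longrightarrow> (\<forall>\<epsilon>>0::real. \<exists>N::nat. \<forall>n r. n \<ge> N \<and> primepow n \<and>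
      rotation_system n r \<and> circular n r \<and> self_dual n r \<and> orientably_regular n r \<longrightarrow>
      (\<forall>a \<in> arcs n. \<forall>b \<in> arcs n. cmod (mixing n r t a b - idm a b) < \<epsilon>))"
proof (intro allI impI)
  fix t :: nat and \<epsilon> :: real
  assume "t \<ge> 1" and e: "\<epsilon> > 0"
  define C :: real where "C = 10^t"
  have C0: "C > 0" by (simp add: C_def)
  define N where "N = nat \<lceil>24 * C / \<epsilon> + 8 * C\<rceil> + 2"
  show "\<exists>N::nat. \<forall>n r. n \<ge> N \<and> primepow n \<and>
      rotation_system n r \<and> circular n r \<and> self_dual n r \<and> orientably_regular n r \<longrightarrow>
      (\<forall>a \<in> arcs n. \<forall>b \<in> arcs n. cmod (mixing n r t a b - idm a b) < \<epsilon>)"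
  proof (rule exI[of _ N], intro allI impI ballI)
    fix n r a b
    assume H: "N \<le> n \<and> primepow n \<and> rotation_system n r \<and> circular n r \<and> self_dual n r \<and> orientably_regular n r"
      and a: "a \<in> arcs n" and b: "b \<in> arcs n"
    have n2: "n \<ge> 2" using H by (simp add: N_def)
    have mbig: "real (n - 1) \<ge> 24 * C / \<epsilon> + 8 * C + 1"
    proof -
      have "real N \<le> real n" using H by simp
      moreover have "real N \<ge> 24 * C / \<epsilon> + 8 * C + 2" unfolding N_def
        using real_nat_ceiling_ge[of "24 * C / \<epsilon> + 8 * C"] by simp
      ultimately show ?thesis using n2 by (simp add: of_nat_diff)
    qed
    have m0: "real (n - 1) > 0" using n2 by simp
    define d where "d = C * (8 / real (n - 1))"
    have eb: "cmod (mpow (arcs n) (vf_transition n r) t a b - idm a b) \<le> d"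
      using main_bound[OF _ _ n2, of r t] H a b unfolding entbound_def d_def C_def by blast
    have "24 * C / \<epsilon> > 0" using C0 e by simp
    have d1: "d \<le> 1"
    proof -
      have "8 * C \<le> real (n - 1)" using mbig \<open>24 * C / \<epsilon> > 0\<close> by linarith
      then show ?thesis unfolding d_def using m0 by (simp add: field_simps)
    qed
    have d2: "3 * d < \<epsilon>"
    proof -
      have "24 * C / \<epsilon> < real (n - 1)" using mbig C0 by linarith
      then have "24 * C < \<epsilon> * real (n - 1)" using e by (simp add: field_simps)
      then show ?thesis unfolding d_def using m0 by (simp add: field_simps)
    qed
    have "cmod (mixing n r t a b - idm a b) \<le> 3 * d"
      unfolding mixing_def Let_def by (rule mix_bound[OF eb d1])
    then show "cmod (mixing n r t a b - idm a b) < \<epsilon>" using d2 by linarith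
  qed
qed

end
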